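(* Let $G$ be a graph that has a compatible tree-representation $\{T(v)\}$. Then $G$ has a simple vertex. Furthermore, any vertex $v$ that maximizes the depth of the root of $T(v)$ (among all vertices of $G$) is a simple vertex.
   Context: Graphs are finite and simple; $N[v]$ denotes the closed neighbourhood of $v$. A host tree $T$ is a rooted tree whose arcs carry positive integer weights; the depth of a node is the sum of arc weights on its path to the root. A subtree is a connected node set of $T$; its root is its node of smallest depth. A tree-representation of $G$ assigns to each vertex $v$ a subtree $T(v)$ of $T$ such that for distinct $v,w$, $(v,w)$ is an edge iff $T(v)\cap T(w)\neq\emptyset$. For subtrees $T_1,T_2$, $T_1$ overshadows $T_2$ if every node of $T_2\setminus T_1$ has depth strictly greater than every node of $T_2\cap T_1$. A tree-representation is compatible if for every two vertices $v,w$, $T(v)$ overshadows $T(w)$ or $T(w)$ overshadows $T(v)$. A vertex $v$ is simple if $N[v]$ can be ordered as $u_1,\dots,u_d$ with $N[u_1]\subseteq\dots\subseteq N[u_d]$. *)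

theory Defs
  imports Main
begin

definition simple_graph :: "'v set \<Rightarrow> ('v \<Rightarrow> 'v \<Rightarrow> bool) \<Rightarrow> bool" where
  "simple_graph V E \<longleftrightarrow> finite V \<and>
     (\<forall>u v. E u v \<longrightarrow> u \<in> V \<and> v \<in> V) \<and>
     (\<forall>u v. E u v \<longrightarrow> E v u) \<and> (\<forall>v. \<not> E v v)"

definition closed_nbhd :: "'v set \<Rightarrow> ('v \<Rightarrow> 'v \<Rightarrow> bool) \<Rightarrow> 'v \<Rightarrow> 'v set" where
  "closed_nbhd V E v = {u \<in> V. u = v \<or> E v u}"

definition simple_vertex :: "'v set \<Rightarrow> ('v \<Rightarrow> 'v \<Rightarrow> bool) \<Rightarrow> 'v \<Rightarrow> bool" where
  "simple_vertex V E v \<longleftrightarrow>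
     (\<exists>us. distinct us \<and> set us = closed_nbhd V E v \<and>
        (\<forall>i j. i < j \<and> j < length us \<longrightarrow>
           closed_nbhd V E (us ! i) \<subseteq> closed_nbhd V E (us ! j)))"

text \<open>A rooted host tree is given by a finite node set Nd, a root r \<in> Nd, a parent
function par and an arc weight function w (w x is the weight of the arc from x to
par x).\<close>
definition host_tree :: "'n set \<Rightarrow> 'n \<Rightarrow> ('n \<Rightarrow> 'n) \<Rightarrow> ('n \<Rightarrow> nat) \<Rightarrow> bool" where
  "host_tree Nd r par w \<longleftrightarrow> finite Nd \<and> r \<in> Nd \<and>
     (\<forall>x \<in> Nd - {r}. par x \<in> Nd \<and> w x > 0) \<and>
     (\<forall>x \<in> Nd. \<exists>k. (par ^^ k) x = r)"

definition depth :: "'n \<Rightarrow> ('n \<Rightarrow> 'n) \<Rightarrow> ('n \<Rightarrow> nat) \<Rightarrow> 'n \<Rightarrow> nat" where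
  "depth r par w x = (\<Sum>k < (LEAST k. (par ^^ k) x = r). w ((par ^^ k) x))"

definition tree_adj :: "'n set \<Rightarrow> 'n \<Rightarrow> ('n \<Rightarrow> 'n) \<Rightarrow> 'n \<Rightarrow> 'n \<Rightarrow> bool" where
  "tree_adj Nd r par x y \<longleftrightarrow> x \<in> Nd \<and> y \<in> Nd \<and>
     ((x \<noteq> r \<and> par x = y) \<or> (y \<noteq> r \<and> par y = x))"

definition subtree :: "'n set \<Rightarrow> 'n \<Rightarrow> ('n \<Rightarrow> 'n) \<Rightarrow> 'n set \<Rightarrow> bool" where
  "subtree Nd r par S \<longleftrightarrow> S \<noteq> {} \<and> S \<subseteq> Nd \<and>
     (\<forall>x \<in> S. \<forall>y \<in> S.
        (x, y) \<in> {(a, b). a \<in> S \<and> b \<in> S \<and> tree_adj Nd r par a b}\<^sup>*)"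

text \<open>Depth of the root of a subtree (the root is its node of smallest depth).\<close>
definition root_depth :: "'n \<Rightarrow> ('n \<Rightarrow> 'n) \<Rightarrow> ('n \<Rightarrow> nat) \<Rightarrow> 'n set \<Rightarrow> nat" where
  "root_depth r par w S = Min (depth r par w ` S)"

definition tree_representation ::
  "'v set \<Rightarrow> ('v \<Rightarrow> 'v \<Rightarrow> bool) \<Rightarrow> 'n set \<Rightarrow> 'n \<Rightarrow> ('n \<Rightarrow> 'n) \<Rightarrow> ('v \<Rightarrow> 'n set) \<Rightarrow> bool" where
  "tree_representation V E Nd r par T \<longleftrightarrow>
     (\<forall>v \<in> V. subtree Nd r par (T v)) \<and>
     (\<forall>v \<in> V. \<forall>u \<in> V. v \<noteq> u \<longrightarrow> (E v u \<longleftrightarrow> T v \<inter> T u \<noteq> {}))"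

definition overshadows :: "'n \<Rightarrow> ('n \<Rightarrow> 'n) \<Rightarrow> ('n \<Rightarrow> nat) \<Rightarrow> 'n set \<Rightarrow> 'n set \<Rightarrow> bool" where
  "overshadows r par w T1 T2 \<longleftrightarrow>
     (\<forall>x \<in> T2 - T1. \<forall>y \<in> T2 \<inter> T1. depth r par w y < depth r par w x)"

definition compatible_tree_representation ::
  "'v set \<Rightarrow> ('v \<Rightarrow> 'v \<Rightarrow> bool) \<Rightarrow> 'n set \<Rightarrow> 'n \<Rightarrow> ('n \<Rightarrow> 'n) \<Rightarrow> ('n \<Rightarrow> nat)
     \<Rightarrow> ('v \<Rightarrow> 'n set) \<Rightarrow> bool" where
  "compatible_tree_representation V E Nd r par w T \<longleftrightarrow>
     tree_representation V E Nd r par T \<and>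
     (\<forall>v \<in> V. \<forall>u \<in> V. overshadows r par w (T v) (T u) \<or> overshadows r par w (T u) (T v))"

end

theory Submission
  imports Defs
begin

lemma least_step:
  assumes ht: "host_tree Nd r par w" and x: "x \<in> Nd" "x \<noteq> r"
  shows "(LEAST k. (par ^^ k) x = r) = Suc (LEAST k. (par ^^ k) (par x) = r)"
proof -
  have px: "par x \<in> Nd" using ht x unfolding host_tree_def by auto
  then obtain k0 where k0: "(par ^^ k0) (par x) = r" using ht unfolding host_tree_def by blast
  have sh: "\<And>n. (par ^^ Suc n) x = (par ^^ n) (par x)" by (simp only: funpow_Suc_right comp_apply)
  let ?n = "LEAST k. (par ^^ k) (par x) = r"
  have n: "(par ^^ ?n) (par x) = r" using k0 by (rule LeastI)
  show ?thesis
  proof (rule Least_equality)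
    show "(par ^^ Suc ?n) x = r" using n sh by simp
  next
    fix k assume k: "(par ^^ k) x = r"
    show "Suc ?n \<le> k"
    proof (cases k)
      case 0 then show ?thesis using k x by simp
    next
      case (Suc k') then have "(par ^^ k') (par x) = r" using k sh by simp
      then have "?n \<le> k'" by (rule Least_le)
      then show ?thesis using Suc by simp
    qed
  qed
qed

lemma depth_step:
  assumes ht: "host_tree Nd r par w" and x: "x \<in> Nd" "x \<noteq> r"
  shows "depth r par w x = w x + depth r par w (par x)"
proof -
  have sh: "\<And>n. (par ^^ Suc n) x = (par ^^ n) (par x)" by (simp only: funpow_Suc_right comp_apply)
  show ?thesis unfolding depth_def least_step[OF assms]
    by (simp only: sum.lessThan_Suc_shift sh) simp
qed

lemma depth_par_less:
  assumes ht: "host_tree Nd r par w" and x: "x \<in> Nd" "x \<noteq> r"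
  shows "depth r par w (par x) < depth r par w x"
proof -
  have "w x > 0" using ht x unfolding host_tree_def by auto
  then show ?thesis using depth_step[OF assms] by simp
qed

definition anc :: "'n \<Rightarrow> ('n \<Rightarrow> 'n) \<Rightarrow> 'n set \<Rightarrow> 'n \<Rightarrow> 'n \<Rightarrow> nat \<Rightarrow> bool" where
  "anc r par S x m k \<longleftrightarrow> (par ^^ k) x = m \<and> (\<forall>j\<le>k. (par ^^ j) x \<in> S) \<and> (\<forall>j<k. (par ^^ j) x \<noteq> r)"

lemma subtree_anc:
  assumes ht: "host_tree Nd r par w" and st: "subtree Nd r par S"
    and m: "m \<in> S" "\<forall>y\<in>S. depth r par w m \<le> depth r par w y" and x: "x \<in> S"
  shows "\<exists>k. anc r par S x m k"
proof -
  let ?R = "{(a, b). a \<in> S \<and> b \<in> S \<and> tree_adj Nd r par a b}"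
  have SN: "S \<subseteq> Nd" using st unfolding subtree_def by auto
  have "(x, m) \<in> ?R\<^sup>*" using st x m unfolding subtree_def by auto
  then show ?thesis
  proof (induction rule: converse_rtrancl_induct)
    case base
    show ?case by (rule exI[of _ 0]) (simp add: anc_def m)
  next
    case (step a b)
    then obtain k where k: "anc r par S b m k" by blast
    have a: "a \<in> S" "b \<in> S" and adj: "(a \<noteq> r \<and> par a = b) \<or> (b \<noteq> r \<and> par b = a)"
      using step(1) unfolding tree_adj_def by auto
    have sh: "\<And>n. (par ^^ Suc n) a = (par ^^ n) (par a)" by (simp only: funpow_Suc_right comp_apply)
    have shb: "\<And>n. (par ^^ Suc n) b = (par ^^ n) (par b)" by (simp only: funpow_Suc_right comp_apply)
    from adj show ?case
    proof
      assume h: "a \<noteq> r \<and> par a = b"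
      have "anc r par S a m (Suc k)"
        unfolding anc_def
      proof (intro conjI allI impI)
        show "(par ^^ Suc k) a = m" using k h sh unfolding anc_def by simp
      next
        fix j assume "j \<le> Suc k"
        then show "(par ^^ j) a \<in> S"
          using k h sh a unfolding anc_def by (cases j) auto
      next
        fix j assume "j < Suc k"
        then show "(par ^^ j) a \<noteq> r"
          using k h sh a unfolding anc_def by (cases j) auto
      qed
      then show ?thesis by blast
    next
      assume h: "b \<noteq> r \<and> par b = a"
      show ?thesis
      proof (cases k)
        case 0
        then have "b = m" using k unfolding anc_def by simp
        then have "depth r par w a < depth r par w m"
          using depth_par_less[OF ht, of b] h SN a by auto
        then show ?thesis using m a by force
      next
        case (Suc k')
        have "anc r par S a m k'"
          unfolding anc_def
        proof (intro conjI allI impI)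
          show "(par ^^ k') a = m" using k h shb Suc unfolding anc_def by metis
        next
          fix j assume "j \<le> k'"
          then show "(par ^^ j) a \<in> S"
            using k h shb Suc unfolding anc_def by (metis Suc_le_mono)
        next
          fix j assume "j < k'"
          then show "(par ^^ j) a \<noteq> r"
            using k h shb Suc unfolding anc_def by (metis Suc_less_eq)
        qed
        then show ?thesis by blast
      qed
    qed
  qed
qed

lemma anc_dec:
  assumes ht: "host_tree Nd r par w" and SN: "S \<subseteq> Nd" and a: "anc r par S x m k" and jk: "j < k"
  shows "depth r par w m < depth r par w ((par ^^ j) x)"
proof -
  have "\<forall>i. j < i \<longrightarrow> i \<le> k \<longrightarrow> depth r par w ((par ^^ i) x) < depth r par w ((par ^^ j) x)"
  proof (intro allI)
    fix i show "j < i \<longrightarrow> i \<le> k \<longrightarrow> depth r par w ((par ^^ i) x) < depth r par w ((par ^^ j) x)"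
    proof (induction i)
      case 0 then show ?case by simp
    next
      case (Suc i)
      show ?case
      proof (intro impI)
        assume h: "j < Suc i" "Suc i \<le> k"
        have i1: "(par ^^ i) x \<in> Nd" "(par ^^ i) x \<noteq> r" using a h SN unfolding anc_def by auto
        have "depth r par w ((par ^^ Suc i) x) < depth r par w ((par ^^ i) x)"
          using depth_par_less[OF ht i1] by simp
        moreover have "j = i \<or> depth r par w ((par ^^ i) x) < depth r par w ((par ^^ j) x)"
          using Suc h by auto
        ultimately show "depth r par w ((par ^^ Suc i) x) < depth r par w ((par ^^ j) x)" by auto
      qed
    qed
  qed
  then show ?thesis using a jk unfolding anc_def by auto
qed

lemma root_exists:
  assumes "finite Nd" "subtree Nd r par S"
  shows "\<exists>m\<in>S. depth r par w m = root_depth r par w S \<and> (\<forall>y\<in>S. depth r par w m \<le> depth r par w y)"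
proof -
  have fS: "finite S" "S \<noteq> {}" using assms unfolding subtree_def by (auto intro: finite_subset)
  then have "Min (depth r par w ` S) \<in> depth r par w ` S" by (intro Min_in) auto
  then obtain m where m: "m \<in> S" "depth r par w m = Min (depth r par w ` S)" by auto
  then show ?thesis unfolding root_depth_def using fS by (auto intro!: bexI[of _ m])
qed

lemma chain_sort:
  fixes f :: "'a \<Rightarrow> 'b set"
  assumes "finite A" and fin: "\<forall>a\<in>A. finite (f a)"
    and ch: "\<forall>a\<in>A. \<forall>b\<in>A. f a \<subseteq> f b \<or> f b \<subseteq> f a"
  shows "\<exists>us. distinct us \<and> set us = A \<and> (\<forall>i j. i < j \<and> j < length us \<longrightarrow> f (us ! i) \<subseteq> f (us ! j))"
proof -
  obtain xs where xs: "set xs = A" "distinct xs" using finite_distinct_list[OF assms(1)] by blast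
  define us where "us = sort_key (\<lambda>u. card (f u)) xs"
  have d: "distinct us" "set us = A" using xs unfolding us_def by auto
  have so: "sorted (map (\<lambda>u. card (f u)) us)" unfolding us_def by simp
  show ?thesis
  proof (intro exI conjI allI impI)
    fix i j assume ij: "i < j \<and> j < length us"
    then have c: "card (f (us ! i)) \<le> card (f (us ! j))"
      using so by (auto simp: sorted_iff_nth_mono)
    have m: "us ! i \<in> A" "us ! j \<in> A" using ij d by auto
    show "f (us ! i) \<subseteq> f (us ! j)"
    proof (rule ccontr)
      assume n: "\<not> f (us ! i) \<subseteq> f (us ! j)"
      then have "f (us ! j) \<subset> f (us ! i)" using ch m by blast
      then have "card (f (us ! j)) < card (f (us ! i))" using fin m by (intro psubset_card_mono) auto
      then show False using c by simp
    qed
  qed (use d in auto)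
qed


lemma key:
  assumes sg: "simple_graph V E" and ht: "host_tree Nd r par w"
    and ctr: "compatible_tree_representation V E Nd r par w T"
    and v: "v \<in> V" and maxv: "\<forall>u\<in>V. root_depth r par w (T u) \<le> root_depth r par w (T v)"
  shows "simple_vertex V E v"
proof -
  let ?D = "depth r par w" and ?RD = "root_depth r par w" and ?N = "closed_nbhd V E"
  have fN: "finite Nd" using ht unfolding host_tree_def by auto
  have stT: "\<And>u. u \<in> V \<Longrightarrow> subtree Nd r par (T u)" using ctr
    unfolding compatible_tree_representation_def tree_representation_def by auto
  have edge: "\<And>a b. a \<in> V \<Longrightarrow> b \<in> V \<Longrightarrow> a \<noteq> b \<Longrightarrow> E a b \<longleftrightarrow> T a \<inter> T b \<noteq> {}" using ctr
    unfolding compatible_tree_representation_def tree_representation_def by auto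
  have EV: "\<And>a b. E a b \<Longrightarrow> a \<in> V \<and> b \<in> V" and Eirr: "\<And>a. \<not> E a a"
    using sg unfolding simple_graph_def by auto
  have TN: "\<And>u. u \<in> V \<Longrightarrow> T u \<subseteq> Nd" using stT unfolding subtree_def by auto
  have rt: "\<And>u. u \<in> V \<Longrightarrow> \<exists>m\<in>T u. ?D m = ?RD (T u) \<and> (\<forall>y\<in>T u. ?D m \<le> ?D y)"
    using root_exists[OF fN stT] by blast
  obtain \<rho> where \<rho>: "\<rho> \<in> T v" "?D \<rho> = ?RD (T v)" "\<forall>y\<in>T v. ?D \<rho> \<le> ?D y" using rt[OF v] by blast
  have inr: "\<rho> \<in> T u" if u: "u \<in> ?N v" for u
  proof (cases "u = v")
    case True then show ?thesis using \<rho> by simp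
  next
    case False
    then have uV: "u \<in> V" and Evu: "E v u" using u unfolding closed_nbhd_def by auto
    then obtain x where x: "x \<in> T u" "x \<in> T v" using edge[OF v uV] False by auto
    obtain mu where mu: "mu \<in> T u" "?D mu = ?RD (T u)" "\<forall>y\<in>T u. ?D mu \<le> ?D y" using rt[OF uV] by blast
    obtain k1 where k1: "anc r par (T u) x mu k1" using subtree_anc[OF ht stT[OF uV] mu(1) mu(3) x(1)] by blast
    obtain k2 where k2: "anc r par (T v) x \<rho> k2" using subtree_anc[OF ht stT[OF v] \<rho>(1) \<rho>(3) x(2)] by blast
    show ?thesis
    proof (cases "k2 \<le> k1")
      case True then show ?thesis using k1 k2 unfolding anc_def by auto
    next
      case False
      then have "?D \<rho> < ?D ((par ^^ k1) x)" using anc_dec[OF ht TN[OF v] k2] by simp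
      moreover have "(par ^^ k1) x = mu" using k1 unfolding anc_def by simp
      ultimately show ?thesis using mu(2) \<rho>(2) maxv uV by force
    qed
  qed
  have NV: "\<And>u. u \<in> ?N v \<Longrightarrow> u \<in> V" unfolding closed_nbhd_def by auto
  have incl: "?N u' \<subseteq> ?N u"
    if u: "u \<in> ?N v" and u': "u' \<in> ?N v" and ov: "overshadows r par w (T u) (T u')" for u u'
  proof
    have uV: "u \<in> V" and u'V: "u' \<in> V" using u u' NV by auto
    fix z assume z: "z \<in> ?N u'"
    then have zV: "z \<in> V" unfolding closed_nbhd_def by auto
    show "z \<in> ?N u"
    proof (cases "z = u")
      case True then show ?thesis using uV unfolding closed_nbhd_def by auto
    next
      case zu: False
      have "T u \<inter> T z \<noteq> {}"
      proof (cases "z = u'")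
        case True then show ?thesis using inr u u' by auto
      next
        case False
        then have "E u' z" using z unfolding closed_nbhd_def by auto
        then obtain x where x: "x \<in> T u'" "x \<in> T z" using edge[OF u'V zV] False by auto
        obtain mz where mz: "mz \<in> T z" "?D mz = ?RD (T z)" "\<forall>y\<in>T z. ?D mz \<le> ?D y" using rt[OF zV] by blast
        obtain mu where mu: "mu \<in> T u'" "?D mu = ?RD (T u')" "\<forall>y\<in>T u'. ?D mu \<le> ?D y" using rt[OF u'V] by blast
        obtain k1 where k1: "anc r par (T z) x mz k1" using subtree_anc[OF ht stT[OF zV] mz(1) mz(3) x(2)] by blast
        obtain k2 where k2: "anc r par (T u') x mu k2" using subtree_anc[OF ht stT[OF u'V] mu(1) mu(3) x(1)] by blast
        obtain a where a: "a \<in> T z" "a \<in> T u'" "?D a \<le> ?D \<rho>"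
        proof (cases "k1 \<le> k2")
          case True
          then have "mz \<in> T u'" using k1 k2 unfolding anc_def by auto
          then show ?thesis using that[of mz] mz maxv zV \<rho>(2) by auto
        next
          case False
          then have "mu \<in> T z" using k1 k2 unfolding anc_def by auto
          then show ?thesis using that[of mu] mu maxv u'V \<rho>(2) by auto
        qed
        have "a \<in> T u"
        proof (rule ccontr)
          assume "a \<notin> T u"
          then have "?D \<rho> < ?D a" using ov a inr[OF u] inr[OF u'] unfolding overshadows_def by blast
          then show False using a by simp
        qed
        then show ?thesis using a by auto
      qed
      then have "E u z" using edge[OF uV zV zu[symmetric]] by auto
      then show ?thesis using zV unfolding closed_nbhd_def by auto
    qed
  qed
  have ch: "\<forall>a\<in>?N v. \<forall>b\<in>?N v. ?N a \<subseteq> ?N b \<or> ?N b \<subseteq> ?N a"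
  proof (intro ballI)
    fix a b assume a: "a \<in> ?N v" and b: "b \<in> ?N v"
    have "overshadows r par w (T a) (T b) \<or> overshadows r par w (T b) (T a)"
      using ctr NV[OF a] NV[OF b] unfolding compatible_tree_representation_def by auto
    then show "?N a \<subseteq> ?N b \<or> ?N b \<subseteq> ?N a" using incl a b by blast
  qed
  have fV: "finite V" using sg unfolding simple_graph_def by auto
  have fin: "\<forall>a\<in>?N v. finite (?N a)" using fV unfolding closed_nbhd_def by auto
  have "finite (?N v)" using fV unfolding closed_nbhd_def by auto
  from chain_sort[OF this fin ch] show ?thesis unfolding simple_vertex_def by blast
qed

theorem lemma2:
  fixes V :: "'v set" and E :: "'v \<Rightarrow> 'v \<Rightarrow> bool"
    and Nd :: "'n set" and r :: 'n and par :: "'n \<Rightarrow> 'n" and w :: "'n \<Rightarrow> nat"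
    and T :: "'v \<Rightarrow> 'n set"
  assumes "simple_graph V E" and "V \<noteq> {}"
    and "host_tree Nd r par w"
    and "compatible_tree_representation V E Nd r par w T"
  shows "(\<exists>v \<in> V. simple_vertex V E v) \<and>
         (\<forall>v \<in> V. (\<forall>u \<in> V. root_depth r par w (T u) \<le> root_depth r par w (T v))
                   \<longrightarrow> simple_vertex V E v)"
proof -
  have fV: "finite V" using assms(1) unfolding simple_graph_def by auto
  have all: "\<forall>v \<in> V. (\<forall>u \<in> V. root_depth r par w (T u) \<le> root_depth r par w (T v))
                   \<longrightarrow> simple_vertex V E v"
    using key[OF assms(1) assms(3) assms(4)] by blast
  obtain v where v: "v \<in> V" "\<forall>u \<in> V. root_depth r par w (T u) \<le> root_depth r par w (T v)"
  proof -
    let ?f = "\<lambda>u. root_depth r par w (T u)"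
    have "Max (?f ` V) \<in> ?f ` V" using fV assms(2) by (intro Max_in) auto
    then obtain v where "v \<in> V" "?f v = Max (?f ` V)" by auto
    then show ?thesis using that fV by auto
  qed
  show ?thesis using all v by blast
qed

end
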